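(* Let $\Theta_i,\Theta_j,\Theta_k\in[0,\pi)$ satisfy $\cos\Theta_i+\cos\Theta_j\cos\Theta_k\ge0$, $\cos\Theta_j+\cos\Theta_k\cos\Theta_i\ge0$, $\cos\Theta_k+\cos\Theta_i\cos\Theta_j\ge0$. In hyperbolic geometry, for every $\epsilon>0$ there exists $L>0$ such that for all $r_i,r_j,r_k>0$ with $r_i>L$, the inner angle $\vartheta_i$ at the center of radius $r_i$ of the triangle of centers of three disks of radii $r_i,r_j,r_k$ meeting in exterior intersection angles $\Theta_i,\Theta_j,\Theta_k$ satisfies $\vartheta_i<\epsilon$. In particular $\lim_{r_i\to+\infty}\vartheta_i=0$ (uniformly in $r_j,r_k$).
   Context: The triangle is the hyperbolic triangle with side lengths $l_i,l_j,l_k$ given by $\cosh l_i=\cosh r_j\cosh r_k+\sinh r_j\sinh r_k\cos\Theta_i$ and cyclically; $\vartheta_i$ is the angle opposite $l_i$. *)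

theory Defs
  imports Complex_Main
begin

text \<open>Hyperbolic length of the edge joining the centers of two disks of radii
  ra, rb that meet at exterior intersection angle Th:
  cosh l = cosh ra cosh rb + sinh ra sinh rb cos Th.\<close>
definition hyp_edge :: "real \<Rightarrow> real \<Rightarrow> real \<Rightarrow> real" where
  "hyp_edge ra rb Th = arcosh (cosh ra * cosh rb + sinh ra * sinh rb * cos Th)"

text \<open>Inner angle opposite the side of length a in the hyperbolic triangle with
  side lengths a, b, c (hyperbolic law of cosines).\<close>
definition hyp_angle :: "real \<Rightarrow> real \<Rightarrow> real \<Rightarrow> real" where
  "hyp_angle a b c = arccos ((cosh b * cosh c - cosh a) / (sinh b * sinh c))"

definition inner_angle_i :: "real \<Rightarrow> real \<Rightarrow> real \<Rightarrow> real \<Rightarrow> real \<Rightarrow> real \<Rightarrow> real" where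
  "inner_angle_i Thi Thj Thk ri rj rk =
     hyp_angle (hyp_edge rj rk Thi) (hyp_edge rk ri Thj) (hyp_edge ri rj Thk)"

end

theory Submission
  imports Defs
begin

lemma D_ident:
  fixes xi xj xk yi yj yk ci cj ck :: real
  assumes "xi^2 = 1 + yi^2" "xj^2 = 1 + yj^2" "xk^2 = 1 + yk^2"
  shows "1 + 2*(xj*xk + yj*yk*ci)*(xk*xi + yk*yi*cj)*(xi*xj + yi*yj*ck)
     - (xj*xk + yj*yk*ci)^2 - (xk*xi + yk*yi*cj)^2 - (xi*xj + yi*yj*ck)^2
   = yj^2*yk^2*(1-ci^2) + yi^2*yk^2*(1-cj^2) + yi^2*yj^2*(1-ck^2)
     + 2*yi^2*yj^2*yk^2*(1 + ci*cj*ck)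
     + 2*xj*xk*yi^2*yj*yk*(ci + cj*ck) + 2*xi*xk*yi*yj^2*yk*(cj + ci*ck)
     + 2*xi*xj*yi*yj*yk^2*(ck + ci*cj)"
  using assms by algebra

lemma D_nonneg:
  fixes xi xj xk yi yj yk ci cj ck :: real
  assumes "xi^2 = 1 + yi^2" "xj^2 = 1 + yj^2" "xk^2 = 1 + yk^2"
    and "xi \<ge> 0" "xj \<ge> 0" "xk \<ge> 0" "yi \<ge> 0" "yj \<ge> 0" "yk \<ge> 0"
    and "\<bar>ci\<bar> \<le> 1" "\<bar>cj\<bar> \<le> 1" "\<bar>ck\<bar> \<le> 1"
    and "ci + cj*ck \<ge> 0" "cj + ck*ci \<ge> 0" "ck + ci*cj \<ge> 0"
  shows "1 + 2*(xj*xk + yj*yk*ci)*(xk*xi + yk*yi*cj)*(xi*xj + yi*yj*ck)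
     - (xj*xk + yj*yk*ci)^2 - (xk*xi + yk*yi*cj)^2 - (xi*xj + yi*yj*ck)^2 \<ge> 0"
proof -
  have s: "1 - ci^2 \<ge> 0" "1 - cj^2 \<ge> 0" "1 - ck^2 \<ge> 0"
    using assms(10-12) by (simp_all add: abs_square_le_1)
  have "\<bar>ci*cj*ck\<bar> \<le> 1"
    using assms(10-12) by (simp add: abs_mult mult_le_one)
  hence p: "1 + ci*cj*ck \<ge> 0" by linarith
  have t1: "yj^2*yk^2*(1-ci^2) \<ge> 0" "yi^2*yk^2*(1-cj^2) \<ge> 0" "yi^2*yj^2*(1-ck^2) \<ge> 0"
    using s by simp_all
  have t2: "2*yi^2*yj^2*yk^2*(1 + ci*cj*ck) \<ge> 0" using p by simp
  have t3: "2*xj*xk*yi^2*yj*yk*(ci + cj*ck) \<ge> 0"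
    using assms by simp
  have t4: "2*xi*xk*yi*yj^2*yk*(cj + ci*ck) \<ge> 0"
    using assms by (simp add: mult.commute)
  have t5: "2*xi*xj*yi*yj*yk^2*(ck + ci*cj) \<ge> 0"
    using assms by simp
  show ?thesis unfolding D_ident[OF assms(1-3)]
    using t1 t2 t3 t4 t5 by linarith
qed

theorem lemma1p6:
  fixes Thi Thj Thk :: real
  assumes "Thi \<in> {0..<pi}" "Thj \<in> {0..<pi}" "Thk \<in> {0..<pi}"
    and "cos Thi + cos Thj * cos Thk \<ge> 0"
    and "cos Thj + cos Thk * cos Thi \<ge> 0"
    and "cos Thk + cos Thi * cos Thj \<ge> 0"
  shows "\<forall>\<epsilon>>0. \<exists>L>0. \<forall>ri rj rk. ri > 0 \<longrightarrow> rj > 0 \<longrightarrow> rk > 0 \<longrightarrow> ri > L \<longrightarrow>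
           inner_angle_i Thi Thj Thk ri rj rk < \<epsilon>"
proof (intro allI impI)
  fix \<epsilon> :: real assume "\<epsilon> > 0"
  define ci where "ci = cos Thi"
  define cj where "cj = cos Thj"
  define ck where "ck = cos Thk"
  have gt: "cos x > -1" if "x \<in> {0..<pi}" for x
    using cos_monotone_0_pi[of x pi] that by auto
  have cgt: "ci > -1" "cj > -1" "ck > -1" using gt assms(1-3) ci_def cj_def ck_def by auto
  have cabs: "\<bar>ci\<bar> \<le> 1" "\<bar>cj\<bar> \<le> 1" "\<bar>ck\<bar> \<le> 1" using ci_def cj_def ck_def by auto
  define m where "m = min cj ck"
  define \<kappa> where "\<kappa> = min 1 (1 + m)"
  have kpos: "\<kappa> > 0" "\<kappa> \<le> 1" using cgt unfolding \<kappa>_def m_def by auto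
  define e where "e = min \<epsilon> 1"
  have e: "0 < e" "e \<le> \<epsilon>" "e \<le> 1" using \<open>\<epsilon> > 0\<close> unfolding e_def by auto
  have epi: "e < pi" using e pi_ge_two by linarith
  define \<eta> where "\<eta> = 1 - cos e"
  have etapos: "\<eta> > 0" using cos_monotone_0_pi[of 0 e] e epi unfolding \<eta>_def by auto
  define M where "M = 2 + 8 / \<eta>"
  have M: "M \<ge> 2" "M > 8 / \<eta>" using etapos unfolding M_def by auto
  define L where "L = 2 * M / \<kappa>"
  show "\<exists>L>0. \<forall>ri rj rk. ri > 0 \<longrightarrow> rj > 0 \<longrightarrow> rk > 0 \<longrightarrow> ri > L \<longrightarrow>
           inner_angle_i Thi Thj Thk ri rj rk < \<epsilon>"
  proof (intro exI[of _ L] conjI allI impI)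
    show "L > 0" using M kpos unfolding L_def by auto
    fix ri rj rk :: real
    assume r: "ri > 0" "rj > 0" "rk > 0" "ri > L"
    define xi where "xi = cosh ri"
    define xj where "xj = cosh rj"
    define xk where "xk = cosh rk"
    define yi where "yi = sinh ri"
    define yj where "yj = sinh rj"
    define yk where "yk = sinh rk"
    have xy: "xi^2 = 1 + yi^2" "xj^2 = 1 + yj^2" "xk^2 = 1 + yk^2"
      unfolding xi_def xj_def xk_def yi_def yj_def yk_def by (simp_all add: cosh_square_eq)
    have x1: "xi \<ge> 1" "xj \<ge> 1" "xk \<ge> 1"
      unfolding xi_def xj_def xk_def by (simp_all add: cosh_real_ge_1)
    have y0: "yi \<ge> 0" "yj \<ge> 0" "yk \<ge> 0"
      unfolding yi_def yj_def yk_def using r by simp_all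
    have yx: "yi \<le> xi" "yj \<le> xj" "yk \<le> xk"
      unfolding xi_def xj_def xk_def yi_def yj_def yk_def by (simp_all add: sinh_le_cosh_real)
    have xiL: "2 * xi \<ge> 1 + ri"
    proof -
      have "2 * xi = exp ri + exp (-ri)" unfolding xi_def by (simp add: cosh_def)
      thus ?thesis using exp_ge_add_one_self[of ri] exp_gt_zero[of "-ri"] by linarith
    qed
    have kxi: "\<kappa> * xi > M"
    proof -
      have "\<kappa> * L = 2 * M" unfolding L_def using kpos by simp
      moreover have "2 * xi > L" using xiL r by linarith
      ultimately have "\<kappa> * (2 * xi) > 2 * M" using kpos
        by (metis mult_strict_left_mono)
      thus ?thesis by simp
    qed
    define A where "A = xj*xk + yj*yk*ci"
    define B where "B = xk*xi + yk*yi*cj"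
    define C where "C = xi*xj + yi*yj*ck"
    have lowB: "B \<ge> \<kappa> * (xk * xi)"
    proof -
      have "yk*yi*cj \<ge> yk*yi*m" using y0 unfolding m_def
        by (simp add: mult_left_mono)
      moreover have "yk*yi*m \<ge> (\<kappa> - 1) * (xk*xi)"
      proof (cases "m \<ge> 0")
        case True
        have "(\<kappa> - 1) * (xk*xi) \<le> 0" using kpos x1 by (intro mult_nonpos_nonneg) simp_all
        moreover have "yk*yi*m \<ge> 0" using True y0 by simp
        ultimately show ?thesis by linarith
      next
        case False
        have "yk*yi \<le> xk*xi" using yx y0 by (simp add: mult_mono)
        hence "yk*yi*m \<ge> xk*xi*m" using False by (simp add: mult_right_mono_neg)
        moreover have "\<kappa> - 1 \<le> m" unfolding \<kappa>_def by simp
        moreover have "xk*xi \<ge> 0" using x1 by simp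
        ultimately show ?thesis by (smt (verit) mult.commute mult_left_mono)
      qed
      ultimately show ?thesis unfolding B_def by (simp add: algebra_simps)
    qed
    have lowC: "C \<ge> \<kappa> * (xi * xj)"
    proof -
      have "yi*yj*ck \<ge> yi*yj*m" using y0 unfolding m_def
        by (simp add: mult_left_mono)
      moreover have "yi*yj*m \<ge> (\<kappa> - 1) * (xi*xj)"
      proof (cases "m \<ge> 0")
        case True
        have "(\<kappa> - 1) * (xi*xj) \<le> 0" using kpos x1 by (intro mult_nonpos_nonneg) simp_all
        moreover have "yi*yj*m \<ge> 0" using True y0 by simp
        ultimately show ?thesis by linarith
      next
        case False
        have "yi*yj \<le> xi*xj" using yx y0 by (simp add: mult_mono)
        hence "yi*yj*m \<ge> xi*xj*m" using False by (simp add: mult_right_mono_neg)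
        moreover have "\<kappa> - 1 \<le> m" unfolding \<kappa>_def by simp
        moreover have "xi*xj \<ge> 0" using x1 by simp
        ultimately show ?thesis by (smt (verit) mult.commute mult_left_mono)
      qed
      ultimately show ?thesis unfolding C_def by (simp add: algebra_simps)
    qed
    have xpos: "xi > 0" "xj > 0" "xk > 0" using x1 by auto
    have Bge: "B \<ge> 2"
    proof -
      have "\<kappa> * (xk * xi) = xk * (\<kappa> * xi)" by simp
      also have "\<dots> \<ge> 1 * (\<kappa> * xi)" using x1 kxi M by (intro mult_right_mono) auto
      finally show ?thesis using lowB kxi M by linarith
    qed
    have Cge: "C \<ge> 2"
    proof -
      have "\<kappa> * (xi * xj) = xj * (\<kappa> * xi)" by simp
      also have "\<dots> \<ge> 1 * (\<kappa> * xi)" using x1 kxi M by (intro mult_right_mono) auto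
      finally show ?thesis using lowC kxi M by linarith
    qed
    have A1: "A \<ge> 1"
    proof -
      have "yj*yk*ci \<ge> yj*yk*(-1)" using cabs y0 by (intro mult_left_mono) auto
      moreover have "xj*xk - yj*yk = cosh (rj - rk)"
        unfolding xj_def xk_def yj_def yk_def by (simp add: cosh_diff)
      moreover have "cosh (rj - rk) \<ge> 1" by (rule cosh_real_ge_1)
      ultimately show ?thesis unfolding A_def by linarith
    qed
    have Ale: "A \<le> 2 * (xj * xk)"
    proof -
      have "yj*yk*ci \<le> yj*yk*1" using cabs y0 by (intro mult_left_mono) auto
      moreover have "yj*yk \<le> xj*xk" using yx y0 by (simp add: mult_mono)
      ultimately show ?thesis unfolding A_def by linarith
    qed
    define sb where "sb = sqrt (B^2 - 1)"
    define sc where "sc = sqrt (C^2 - 1)"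
    have sq: "B \<le> 2 * sqrt (B^2 - 1)" if "B \<ge> 2" for B :: real
    proof -
      have "B^2 \<ge> 2^2" using that by (intro power_mono) auto
      hence "B^2 \<le> 4 * (B^2 - 1)" by simp
      hence "B \<le> sqrt (4 * (B^2 - 1))" by (rule real_le_rsqrt)
      also have "\<dots> = sqrt 4 * sqrt (B^2 - 1)" by (rule real_sqrt_mult)
      also have "sqrt 4 = (2::real)" by (simp add: real_sqrt_eq_iff)
      finally show ?thesis .
    qed
    have sq2: "sqrt (B^2 - 1) \<le> B" if "B \<ge> 2" for B :: real
    proof -
      have "sqrt (B^2 - 1) \<le> sqrt (B^2)" by (intro real_sqrt_le_mono) simp
      thus ?thesis using that by simp
    qed
    have sbB: "B \<le> 2 * sb" "sb \<le> B" using sq[OF Bge] sq2[OF Bge] unfolding sb_def by auto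
    have scC: "C \<le> 2 * sc" "sc \<le> C" using sq[OF Cge] sq2[OF Cge] unfolding sc_def by auto
    have sbpos: "sb > 0" using sbB Bge by linarith
    have scpos: "sc > 0" using scC Cge by linarith
    have P: "sb * sc > 0" using sbpos scpos by simp
    have angle: "inner_angle_i Thi Thj Thk ri rj rk = arccos ((B * C - A) / (sb * sc))"
    proof -
      have a: "hyp_edge rj rk Thi = arcosh A" unfolding hyp_edge_def A_def xj_def xk_def yj_def yk_def ci_def by simp
      have b: "hyp_edge rk ri Thj = arcosh B" unfolding hyp_edge_def B_def xi_def xk_def yi_def yk_def cj_def by simp
      have c: "hyp_edge ri rj Thk = arcosh C" unfolding hyp_edge_def C_def xi_def xj_def yi_def yj_def ck_def by simp
      have B1: "B \<ge> 1" "C \<ge> 1" using Bge Cge by auto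
      show ?thesis unfolding inner_angle_i_def hyp_angle_def a b c
        using A1 B1 by (simp add: sinh_arcosh_real sb_def sc_def)
    qed
    have D: "1 + 2*A*B*C - A^2 - B^2 - C^2 \<ge> 0"
      using D_nonneg[OF xy less_imp_le[OF xpos(1)] less_imp_le[OF xpos(2)] less_imp_le[OF xpos(3)] y0 cabs]
        assms(4-6) unfolding A_def B_def C_def ci_def cj_def ck_def by simp
    have id: "(B^2-1)*(C^2-1) - (B*C-A)^2 = 1 + 2*A*B*C - A^2 - B^2 - C^2"
      by (simp add: power2_eq_square algebra_simps)
    have up: "B * C - A \<le> sb * sc"
    proof (cases "B * C - A \<le> 0")
      case True then show ?thesis using P by linarith
    next
      case False
      have "(B*C-A)^2 \<le> (B^2-1)*(C^2-1)" using D id by linarith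
      hence "B*C-A \<le> sqrt ((B^2-1)*(C^2-1))" by (rule real_le_rsqrt)
      thus ?thesis unfolding sb_def sc_def by (simp add: real_sqrt_mult)
    qed
    have Xle: "(B * C - A) / (sb * sc) \<le> 1" using up P by simp
    have BC: "sb * sc \<le> B * C" using sbB scC sbpos scpos by (intro mult_mono) auto
    have small: "A < \<eta> * (sb * sc)"
    proof -
      define t where "t = \<kappa> * xi"
      have t: "t > M" using kxi t_def by simp
      have "t * t \<ge> t * 2" using t M by (intro mult_left_mono) auto
      hence tt: "t * t > M" using t M by linarith
      have "\<eta> * M > 8" using M(2) etapos by (simp add: field_simps)
      moreover have "\<eta> * (t * t) > \<eta> * M" using tt etapos by simp
      ultimately have e8: "\<eta> * (t * t) > 8" by linarith
      have "B * C \<ge> (\<kappa> * (xk * xi)) * (\<kappa> * (xi * xj))"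
        using lowB lowC kpos xpos Bge by (intro mult_mono) auto
      also have "(\<kappa> * (xk * xi)) * (\<kappa> * (xi * xj)) = (t * t) * (xj * xk)"
        unfolding t_def by (simp add: algebra_simps)
      finally have bc: "B * C \<ge> (t * t) * (xj * xk)" .
      have "4 * (sb * sc) \<ge> B * C"
      proof -
        have "B * C \<le> (2 * sb) * (2 * sc)" using sbB scC Bge Cge by (intro mult_mono) auto
        thus ?thesis by simp
      qed
      hence "4 * (sb * sc) \<ge> (t * t) * (xj * xk)" using bc by linarith
      hence "\<eta> * (4 * (sb * sc)) \<ge> \<eta> * ((t * t) * (xj * xk))" using etapos by simp
      moreover have "\<eta> * ((t * t) * (xj * xk)) > 8 * (xj * xk)"
        using e8 xpos by (simp add: mult.assoc[symmetric])
      ultimately have "4 * (\<eta> * (sb * sc)) > 8 * (xj * xk)" by (simp add: algebra_simps)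
      thus ?thesis using Ale by linarith
    qed
    have "B * C - A > cos e * (sb * sc)"
      using BC small unfolding \<eta>_def by (simp add: algebra_simps)
    hence Xgt: "(B * C - A) / (sb * sc) > cos e" using P by (simp add: pos_less_divide_eq)
    have "arccos ((B * C - A) / (sb * sc)) < arccos (cos e)"
      by (rule arccos_less_arccos) (use Xgt Xle in auto)
    also have "arccos (cos e) = e" using e epi by (intro arccos_cos) auto
    finally show "inner_angle_i Thi Thj Thk ri rj rk < \<epsilon>" using angle e by linarith
  qed
qed

end
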